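(* Let $d\ge 1$ and $r\ge 1$ be integers and let $f$ be a real-valued trigonometric polynomial on $[0,1]^d$ with $\hat f(\omega)=0$ whenever $\|\omega\|_\infty>2r$. Let $\bar f=\hat f(0)$ be its mean value and $f_\ast=\min_{x\in[0,1]^d}f(x)$. Then for every integer $s\ge 3r$, \[ 0\le f_\ast-c_\ast(f,s)\le \|f-\bar f\|_{\rm F}\Big[\Big(1-\frac{6r^2}{s^2}\Big)^{-d}-1\Big], \] and the right-hand side is equivalent to $\|f-\bar f\|_{\rm F}\cdot\frac{6r^2d}{s^2}$ as $s\to+\infty$ with $r,d,f$ fixed.
   Context: Functions on $[0,1]^d$ are identified with $1$-periodic functions on $\mathbb R^d$. Fourier coefficients: $\hat f(\omega)=\int_{[0,1]^d}f(x)e^{-2i\pi\omega^\top x}\,dx$ for $\omega\in\mathbb Z^d$. The F-norm is $\|f\|_{\rm F}=\sum_{\omega\in\mathbb Z^d}|\hat f(\omega)|$. A (complex) trigonometric polynomial of degree at most $s$ is a function $q(x)=\sum_{\omega\in\mathbb Z^d,\|\omega\|_\infty\le s}a_\omega e^{2i\pi\omega^\top x}$ with $a_\omega\in\mathbb C$. For a real-valued trigonometric polynomial $f$ and an integer $s\ge1$, $c_\ast(f,s)$ denotes the supremum of all $c\in\mathbb R$ such that $f-c=\sum_{j=1}^N|q_j|^2$ on $[0,1]^d$ for some finite family of trigonometric polynomials $q_j$ of degree at most $s$ (the value of the degree-$s$ sum-of-squares relaxation). *)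

theory Defs
  imports "HOL-Analysis.Analysis" "HOL-Library.Landau_Symbols"
begin

text \<open>Points of the cube [0,1]^d are vectors of type real^'n (d = CARD('n));
  frequencies are integer vectors of type int^'n.\<close>

definition unit_cube :: "(real^'n) set" where
  "unit_cube = {x. \<forall>i. 0 \<le> x$i \<and> x$i \<le> 1}"

definition char_fun :: "int^'n \<Rightarrow> real^'n \<Rightarrow> complex" where
  "char_fun \<omega> x = cis (2 * pi * (\<Sum>i\<in>UNIV. real_of_int (\<omega>$i) * x$i))"

definition sup_norm_int :: "int^'n \<Rightarrow> int" where
  "sup_norm_int \<omega> = Max (range (\<lambda>i. \<bar>\<omega>$i\<bar>))"

definition trig_poly_deg :: "nat \<Rightarrow> (real^'n \<Rightarrow> complex) \<Rightarrow> bool" where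
  "trig_poly_deg s q \<longleftrightarrow> (\<exists>a :: int^'n \<Rightarrow> complex.
      q = (\<lambda>x. \<Sum>\<omega>\<in>{\<omega>. sup_norm_int \<omega> \<le> int s}. a \<omega> * char_fun \<omega> x))"

definition trig_poly :: "(real^'n \<Rightarrow> complex) \<Rightarrow> bool" where
  "trig_poly q \<longleftrightarrow> (\<exists>s. trig_poly_deg s q)"

definition fourier_coeff :: "(real^'n \<Rightarrow> complex) \<Rightarrow> int^'n \<Rightarrow> complex" where
  "fourier_coeff g \<omega> = integral unit_cube (\<lambda>x. g x * cnj (char_fun \<omega> x))"

definition F_norm :: "(real^'n \<Rightarrow> complex) \<Rightarrow> real" where
  "F_norm g = infsum (\<lambda>\<omega>. norm (fourier_coeff g \<omega>)) UNIV"

definition c_star :: "(real^'n \<Rightarrow> real) \<Rightarrow> nat \<Rightarrow> real" where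
  "c_star f s = Sup {c. \<exists>qs :: (real^'n \<Rightarrow> complex) list.
      (\<forall>q\<in>set qs. trig_poly_deg s q) \<and>
      (\<forall>x\<in>unit_cube. f x - c = (\<Sum>q\<leftarrow>qs. (cmod (q x))^2))}"

definition f_min :: "(real^'n \<Rightarrow> real) \<Rightarrow> real" where
  "f_min f = Inf (f ` unit_cube)"

end

theory Submission
  imports Defs
begin

lemma unit_cube_cbox: "(unit_cube :: (real^'n) set) = cbox 0 1"
  unfolding unit_cube_def by (auto simp: mem_box_cart)

lemma one_vec_nth'[simp]: "(1::'a::one^'n)$i = 1"
  by (simp add: one_vec_def)

lemma char_fun_add: "char_fun \<omega> (x + y) = char_fun \<omega> x * char_fun \<omega> y"
  unfolding char_fun_def by (simp add: cis_mult[symmetric] distrib_left sum.distrib algebra_simps)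

lemma char_fun_plus_freq: "char_fun (\<omega> + \<nu>) x = char_fun \<omega> x * char_fun \<nu> x"
  unfolding char_fun_def by (simp add: cis_mult[symmetric] distrib_left distrib_right sum.distrib algebra_simps)

lemma char_fun_uminus_freq: "char_fun (- \<nu>) x = cnj (char_fun \<nu> x)"
  unfolding char_fun_def by (simp add: cis_cnj sum_negf)

lemma char_fun_minus_freq: "char_fun (\<omega> - \<nu>) x = char_fun \<omega> x * cnj (char_fun \<nu> x)"
  using char_fun_plus_freq[of \<omega> "-\<nu>" x] by (simp add: char_fun_uminus_freq)

lemma char_fun_zero[simp]: "char_fun 0 x = 1"
  unfolding char_fun_def by simp

lemma cmod_char_fun[simp]: "cmod (char_fun \<omega> x) = 1"
  unfolding char_fun_def by simp

lemma continuous_char_fun: "continuous_on S (char_fun \<omega>)"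
  unfolding char_fun_def by (intro continuous_intros)

lemma char_fun_integrable: "char_fun \<omega> integrable_on cbox a b"
  by (rule integrable_continuous, rule continuous_char_fun)

lemma char_fun_shift_axis:
  "char_fun \<omega> (x + axis i t) = cis (2 * pi * (real_of_int (\<omega>$i) * t)) * char_fun \<omega> x"
proof -
  have "(\<Sum>j\<in>UNIV. real_of_int (\<omega>$j) * (x + axis i t)$j) =
        (\<Sum>j\<in>UNIV. real_of_int (\<omega>$j) * x$j) + real_of_int (\<omega>$i) * t"
  proof -
    have "\<And>j. real_of_int (\<omega>$j) * (x + axis i t)$j = real_of_int (\<omega>$j) * x$j + (if j = i then real_of_int (\<omega>$i) * t else 0)"
      by (simp add: axis_def distrib_left)
    then show ?thesis by (simp add: sum.distrib)
  qed
  then show ?thesis unfolding char_fun_def by (simp add: cis_mult[symmetric] distrib_left algebra_simps)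
qed

lemma cis_2pi_int: "cis (2 * pi * real_of_int k) = 1"
  by (rule cis_multiple_2pi) simp

lemma box_split_le:
  fixes a b :: "real^'n"
  assumes "c \<le> b$i"
  shows "cbox a b \<inter> {x. x \<bullet> axis i 1 \<le> c} = cbox a (\<chi> j. if j = i then c else b$j)"
proof (rule set_eqI)
  fix x :: "real^'n"
  have "(\<forall>j. a$j \<le> x$j \<and> x$j \<le> (if j = i then c else b$j)) \<longleftrightarrow> (\<forall>j. a$j \<le> x$j \<and> x$j \<le> b$j) \<and> x$i \<le> c"
  proof safe
    fix j assume H: "\<forall>j. a$j \<le> x$j \<and> x$j \<le> (if j = i then c else b$j)"
    show "a$j \<le> x$j" using H by blast
    show "x$j \<le> b$j" using H[rule_format, of j] assms by (cases "j = i") auto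
  next
    assume H: "\<forall>j. a$j \<le> x$j \<and> x$j \<le> (if j = i then c else b$j)"
    show "x$i \<le> c" using H[rule_format, of i] by simp
  next
    fix j assume "\<forall>j. a$j \<le> x$j \<and> x$j \<le> b$j" "x$i \<le> c"
    then show "a$j \<le> x$j" "x$j \<le> (if j = i then c else b$j)" by auto
  qed
  then show "x \<in> cbox a b \<inter> {x. x \<bullet> axis i 1 \<le> c} \<longleftrightarrow> x \<in> cbox a (\<chi> j. if j = i then c else b$j)"
    by (simp add: mem_box_cart inner_axis)
qed

lemma box_split_ge:
  fixes a b :: "real^'n"
  assumes "a$i \<le> c"
  shows "cbox a b \<inter> {x. x \<bullet> axis i 1 \<ge> c} = cbox (\<chi> j. if j = i then c else a$j) b"
proof (rule set_eqI)
  fix x :: "real^'n"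
  have "(\<forall>j. (if j = i then c else a$j) \<le> x$j \<and> x$j \<le> b$j) \<longleftrightarrow> (\<forall>j. a$j \<le> x$j \<and> x$j \<le> b$j) \<and> c \<le> x$i"
  proof safe
    fix j assume H: "\<forall>j. (if j = i then c else a$j) \<le> x$j \<and> x$j \<le> b$j"
    show "x$j \<le> b$j" using H by blast
    show "a$j \<le> x$j" using H[rule_format, of j] assms by (cases "j = i") auto
  next
    assume H: "\<forall>j. (if j = i then c else a$j) \<le> x$j \<and> x$j \<le> b$j"
    show "c \<le> x$i" using H[rule_format, of i] by simp
  next
    fix j assume "\<forall>j. a$j \<le> x$j \<and> x$j \<le> b$j" "c \<le> x$i"
    then show "(if j = i then c else a$j) \<le> x$j" "x$j \<le> b$j" by auto
  qed
  then show "x \<in> cbox a b \<inter> {x. x \<bullet> axis i 1 \<ge> c} \<longleftrightarrow> x \<in> cbox (\<chi> j. if j = i then c else a$j) b"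
    by (simp add: mem_box_cart inner_axis)
qed

lemma integral_char_fun_nz:
  fixes \<omega> :: "int^'n"
  assumes "\<omega> \<noteq> 0"
  shows "integral (cbox 0 1) (char_fun \<omega>) = 0"
proof -
  obtain i where wi: "\<omega>$i \<noteq> 0" using assms by (auto simp: vec_eq_iff)
  define w where "w = real_of_int (\<omega>$i)"
  have w0: "w \<noteq> 0" using wi by (simp add: w_def)
  define t where "t = 1 / (2 * \<bar>w\<bar>)"
  have t0: "0 < t" "t \<le> 1" using w0 wi unfolding t_def w_def
    by (auto simp: field_simps)
  have ct: "cis (2 * pi * (w * t)) = -1"
  proof (cases "w > 0")
    case True then show ?thesis by (simp add: t_def)
  next
    case False then have "w < 0" using w0 by simp
    then have "2 * pi * (w * t) = - pi" by (simp add: t_def)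
    then show ?thesis by (simp add: complex_eq_iff)
  qed
  define g where "g = char_fun \<omega>"
  have gint: "\<And>a b. g integrable_on cbox a b" unfolding g_def by (rule char_fun_integrable)
  define mid :: "real^'n" where "mid = (\<chi> j. if j = i then t else 1)"
  have k: "axis i 1 \<in> (Basis :: (real^'n) set)" by (simp add: axis_in_Basis_iff)
  define I where "I = integral (cbox 0 1) g"
  have s1: "cbox 0 1 \<inter> {x. x \<bullet> axis i 1 \<le> t} = cbox 0 mid"
  proof -
    have "(\<chi> j. if j = i then t else (1::real^'n)$j) = mid" by (simp add: mid_def vec_eq_iff)
    then show ?thesis using t0 box_split_le[of t 1 i 0] by simp
  qed
  have s2: "cbox 0 1 \<inter> {x. x \<bullet> axis i 1 \<ge> t} = cbox (axis i t) (1::real^'n)"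
  proof -
    have "(\<chi> j. if j = i then t else (0::real^'n)$j) = axis i t" by (simp add: vec_eq_iff axis_def)
    then show ?thesis using t0 box_split_ge[of 0 i t 1] by simp
  qed
  have I1: "I = integral (cbox 0 mid) g + integral (cbox (axis i t) 1) g"
    unfolding I_def using integral_split[OF gint k, of 0 1 t] s1 s2 by simp
  have s3: "cbox (axis i t) (1 + axis i t) \<inter> {x. x \<bullet> axis i 1 \<le> 1} = cbox (axis i t) (1::real^'n)"
  proof -
    have "(\<chi> j. if j = i then 1 else (1 + axis i t :: real^'n)$j) = 1" by (simp add: vec_eq_iff axis_def)
    then show ?thesis using t0 box_split_le[of 1 "1 + axis i t" i "axis i t"] by (simp add: axis_def)
  qed
  have s4: "cbox (axis i t) (1 + axis i t) \<inter> {x. x \<bullet> axis i 1 \<ge> 1} = cbox (0 + axis i 1) (mid + axis i (1::real))"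
  proof -
    have "(\<chi> j. if j = i then 1 else (axis i t :: real^'n)$j) = 0 + axis i 1" by (simp add: vec_eq_iff axis_def)
    moreover have "1 + axis i t = mid + axis i (1::real)" by (simp add: vec_eq_iff axis_def mid_def)
    ultimately show ?thesis using t0 box_split_ge[of "axis i t" i 1 "1 + axis i t"] by (simp add: axis_def)
  qed
  have J1: "integral (cbox (axis i t) (1 + axis i t)) g = integral (cbox (axis i t) 1) g + integral (cbox (0 + axis i 1) (mid + axis i 1)) g"
    using integral_split[OF gint k, of "axis i t" "1 + axis i t" 1] s3 s4 by simp
  have per: "integral (cbox (0 + axis i 1) (mid + axis i 1)) g = integral (cbox 0 mid) g"
  proof -
    have "integral (cbox (0 + axis i 1) (mid + axis i 1)) g = integral (cbox 0 mid) (g \<circ> (+) (axis i 1))"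
      by (rule integral_shift_cbox_plus[symmetric])
    also have "g \<circ> (+) (axis i 1) = g"
    proof
      fix x
      have "cis (2 * pi * (real_of_int (\<omega>$i) * 1)) = 1" using cis_2pi_int[of "\<omega>$i"] by simp
      then show "(g \<circ> (+) (axis i 1)) x = g x"
        unfolding g_def o_def using char_fun_shift_axis[of \<omega> x i 1] by (simp add: add.commute)
    qed
    finally show ?thesis .
  qed
  have J2: "integral (cbox (axis i t) (1 + axis i t)) g = - I"
  proof -
    have "integral (cbox (0 + axis i t) (1 + axis i t)) g = integral (cbox 0 1) (g \<circ> (+) (axis i t))"
      by (rule integral_shift_cbox_plus[symmetric])
    also have "g \<circ> (+) (axis i t) = (\<lambda>x. - g x)"
    proof
      fix x
      show "(g \<circ> (+) (axis i t)) x = - g x"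
        unfolding g_def o_def using char_fun_shift_axis[of \<omega> x i t] ct by (simp add: add.commute w_def)
    qed
    also have "integral (cbox 0 1) (\<lambda>x. - g x) = - I" unfolding I_def by (rule integral_neg)
    finally show ?thesis by simp
  qed
  have "- I = integral (cbox (axis i t) 1) g + integral (cbox 0 mid) g" using J1 J2 per by simp
  then have "I = - I" using I1 by (simp add: algebra_simps)
  then have "I = 0" by simp
  then show ?thesis unfolding I_def g_def .
qed

lemma integral_char_fun: "integral (unit_cube :: (real^'n) set) (char_fun (\<omega>::int^'n)) = (if \<omega> = 0 then 1 else 0)"
proof (cases "\<omega> = 0")
  case True
  have "integral (cbox 0 (1::real^'n)) (\<lambda>x. 1::complex) = 1"
  proof -
    have "(0::real^'n) \<in> cbox 0 1" by (simp add: mem_box_cart)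
    then have "Henstock_Kurzweil_Integration.content (cbox 0 (1::real^'n)) = 1" by (subst content_cbox_cart) auto
    then show ?thesis by simp
  qed
  moreover have "char_fun (0::int^'n) = (\<lambda>x. 1)" by (rule ext) simp
  ultimately show ?thesis using True by (simp add: unit_cube_cbox)
next
  case False then show ?thesis by (simp add: unit_cube_cbox integral_char_fun_nz)
qed

definition G30 :: "real \<Rightarrow> real \<Rightarrow> real \<Rightarrow> real" where
  "G30 s m j = 6 * j^5 + 15 * j^4 * m - 15 * j^4 - 20 * j^3 * s^2 - 40 * j^3 * s + 10 * j^3 * m^2 - 30 * j^3 * m - 10 * j^3 - 30 * j^2 * s^2 * m + 30 * j^2 * s^2 - 60 * j^2 * s * m + 60 * j^2 * s - 15 * j^2 * m^2 - 15 * j^2 * m + 30 * j^2 + 30 * j * s^4 + 120 * j * s^3 - 30 * j * s^2 * m^2 + 30 * j * s^2 * m + 170 * j * s^2 - 60 * j * s * m^2 + 60 * j * s * m + 100 * j * s - 25 * j * m^2 + 30 * j * m + 19 * j"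

lemma G30_step: "G30 s m (j+1) - G30 s m j = 30 * (((s+1)^2 - j^2) * ((s+1)^2 - (j+m)^2))"
  unfolding G30_def by algebra

lemma telescope_int:
  fixes G :: "int \<Rightarrow> real"
  shows "(\<Sum>j\<in>{a..<a + int n}. G (j+1) - G j) = G (a + int n) - G a"
proof (induction n)
  case 0 then show ?case by simp
next
  case (Suc n)
  have "{a..<a + int (Suc n)} = insert (a + int n) {a..<a + int n}" by auto
  then show ?case using Suc by (simp add: algebra_simps)
qed

lemma telescope_int':
  fixes G :: "int \<Rightarrow> real"
  assumes "a \<le> b + 1"
  shows "(\<Sum>j\<in>{a..b}. G (j+1) - G j) = G (b + 1) - G a"
proof -
  have "{a..b} = {a..<a + int (nat (b + 1 - a))}" using assms by auto
  moreover have "a + int (nat (b + 1 - a)) = b + 1" using assms by simp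
  ultimately show ?thesis using telescope_int[of G a "nat (b + 1 - a)"] by simp
qed

definition beta :: "nat \<Rightarrow> int \<Rightarrow> real" where
  "beta s j = (if \<bar>j\<bar> \<le> int s then (real s + 1)^2 - (real_of_int j)^2 else 0)"

definition Sk :: "nat \<Rightarrow> int \<Rightarrow> real" where
  "Sk s m = (\<Sum>j\<in>{-int s..int s}. beta s j * beta s (j + m))"

definition Q1 :: "nat \<Rightarrow> int \<Rightarrow> real" where
  "Q1 s m = Sk s m / Sk s 0"

definition Ppol :: "real \<Rightarrow> real \<Rightarrow> real" where
  "Ppol s m = 32 * s^5 + 160 * s^4 - 40 * s^3 * m^2 + 320 * s^3 + 20 * s^2 * m^3 - 120 * s^2 * m^2 - 20 * s^2 * m + 320 * s^2 + 40 * s * m^3 - 110 * s * m^2 - 40 * s * m + 158 * s - m^5 + 20 * m^3 - 30 * m^2 - 19 * m + 30"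

lemma Sk_closed:
  assumes "0 \<le> m" "m \<le> int s"
  shows "30 * Sk s m = Ppol (real s) (real_of_int m)"
proof -
  have "Sk s m = (\<Sum>j\<in>{-int s..int s - m}. beta s j * beta s (j + m))"
    unfolding Sk_def
  proof (rule sum.mono_neutral_right)
    show "\<forall>j\<in>{-int s..int s} - {-int s..int s - m}. beta s j * beta s (j + m) = 0"
      by (auto simp: beta_def)
  qed (use assms in auto)
  also have "\<dots> = (\<Sum>j\<in>{-int s..int s - m}. ((real s+1)^2 - (real_of_int j)^2) * ((real s+1)^2 - (real_of_int j + real_of_int m)^2))"
    by (rule sum.cong) (use assms in \<open>auto simp: beta_def\<close>)
  finally have "30 * Sk s m = (\<Sum>j\<in>{-int s..int s - m}. G30 (real s) (real_of_int m) (real_of_int (j+1)) - G30 (real s) (real_of_int m) (real_of_int j))"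
    by (simp add: sum_distrib_left G30_step)
  also have "\<dots> = G30 (real s) (real_of_int m) (real_of_int (int s - m + 1)) - G30 (real s) (real_of_int m) (real_of_int (- int s))"
    by (rule telescope_int'[where G = "\<lambda>j. G30 (real s) (real_of_int m) (real_of_int j)"]) (use assms in auto)
  also have "\<dots> = Ppol (real s) (real_of_int m)"
    unfolding G30_def Ppol_def by simp algebra
  finally show ?thesis .
qed

lemma Ppol_D: fixes s m :: real shows "2 * s^2 * Ppol s m - Ppol s 0 * (2 * s^2 - 3 * m^2) = 16 * s^5 * m^2 + 40 * s^4 * m^3 + 240 * s^4 * m^2 - 40 * s^4 * m + 80 * s^3 * m^3 + 740 * s^3 * m^2 - 80 * s^3 * m - 2 * s^2 * m^5 + 40 * s^2 * m^3 + 900 * s^2 * m^2 - 38 * s^2 * m + 474 * s * m^2 + 90 * m^2"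
  unfolding Ppol_def by (simp add: power_numeral_reduce algebra_simps)

lemma Ppol_U: fixes s m :: real shows "Ppol s 0 - Ppol s m = 40 * s^3 * m^2 - 20 * s^2 * m^3 + 120 * s^2 * m^2 + 20 * s^2 * m - 40 * s * m^3 + 110 * s * m^2 + 40 * s * m + m^5 - 20 * m^3 + 30 * m^2 + 19 * m"
  unfolding Ppol_def by (simp add: power_numeral_reduce algebra_simps)

lemma Ppol_lower:
  fixes s m :: real
  assumes s: "1 \<le> s" and m: "0 \<le> m" "3 * m \<le> 2 * s" and m01: "m = 0 \<or> 1 \<le> m"
  shows "Ppol s 0 * (2 * s^2 - 3 * m^2) \<le> 2 * s^2 * Ppol s m"
proof (cases "m = 0")
  case True then show ?thesis by (simp add: Ppol_def)
next
  case False
  then have m1: "1 \<le> m" using m01 by simp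
  have s0: "0 \<le> s" using s by simp
  have mm: "m \<le> m^2" using m1 by (simp add: power2_eq_square)
  have ms: "m^2 \<le> s^2" using m s by (intro power_mono) auto
  have h1: "s^4 * m \<le> s^4 * m^2" using mm s0 by (intro mult_left_mono) auto
  have h2: "s^3 * m \<le> s^3 * m^2" using mm s0 by (intro mult_left_mono) auto
  have h3: "s^2 * m \<le> s^2 * m^2" using mm s0 by (intro mult_left_mono) auto
  have h4: "s^2 * m^5 \<le> s^4 * m^3"
  proof -
    have "s^2 * m^5 = (s^2 * m^3) * m^2" by (simp add: power_numeral_reduce)
    also have "\<dots> \<le> (s^2 * m^3) * s^2" using ms m s0 by (intro mult_left_mono) auto
    also have "\<dots> = s^4 * m^3" by (simp add: power_numeral_reduce)
    finally show ?thesis .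
  qed
  have p: "0 \<le> s^5 * m^2" "0 \<le> s^4 * m^3" "0 \<le> s^4 * m^2" "0 \<le> s^3 * m^3" "0 \<le> s^3 * m^2"
     "0 \<le> s^2 * m^3" "0 \<le> s^2 * m^2" "0 \<le> s * m^2" "0 \<le> m^2"
    using s0 m by auto
  have "0 \<le> 16 * s^5 * m^2 + 40 * s^4 * m^3 + 240 * s^4 * m^2 - 40 * s^4 * m + 80 * s^3 * m^3 + 740 * s^3 * m^2 - 80 * s^3 * m - 2 * s^2 * m^5 + 40 * s^2 * m^3 + 900 * s^2 * m^2 - 38 * s^2 * m + 474 * s * m^2 + 90 * m^2" using h1 h2 h3 h4 p by linarith
  then show ?thesis using Ppol_D[of s m] by linarith
qed

lemma Ppol_upper:
  fixes s m :: real
  assumes s: "0 \<le> s" and m: "0 \<le> m" "m \<le> s"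
  shows "Ppol s m \<le> Ppol s 0"
proof -
  have h1: "s^2 * m^3 \<le> s^3 * m^2"
  proof -
    have "s^2 * m^3 = (s^2 * m^2) * m" by (simp add: power_numeral_reduce)
    also have "\<dots> \<le> (s^2 * m^2) * s" using m s by (intro mult_left_mono) auto
    also have "\<dots> = s^3 * m^2" by (simp add: power_numeral_reduce)
    finally show ?thesis .
  qed
  have h2: "s * m^3 \<le> s^2 * m^2"
  proof -
    have "s * m^3 = (s * m^2) * m" by (simp add: power_numeral_reduce)
    also have "\<dots> \<le> (s * m^2) * s" using m s by (intro mult_left_mono) auto
    also have "\<dots> = s^2 * m^2" by (simp add: power_numeral_reduce)
    finally show ?thesis .
  qed
  have h3: "m^3 \<le> s * m^2"
  proof -
    have "m^3 = m^2 * m" by (simp add: power_numeral_reduce)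
    also have "\<dots> \<le> m^2 * s" using m s by (intro mult_left_mono) auto
    finally show ?thesis by (simp add: mult.commute)
  qed
  have p: "0 \<le> s^3 * m^2" "0 \<le> s^2 * m^2" "0 \<le> s^2 * m" "0 \<le> s * m^2" "0 \<le> s * m" "0 \<le> m^5" "0 \<le> m^2" "0 \<le> m"
    using s m by auto
  have "0 \<le> 40 * s^3 * m^2 - 20 * s^2 * m^3 + 120 * s^2 * m^2 + 20 * s^2 * m - 40 * s * m^3 + 110 * s * m^2 + 40 * s * m + m^5 - 20 * m^3 + 30 * m^2 + 19 * m" using h1 h2 h3 p by linarith
  then show ?thesis using Ppol_U[of s m] by linarith
qed

lemma beta_neg: "beta s (- j) = beta s j"
  by (simp add: beta_def)

lemma sum_sym_int: "(\<Sum>j\<in>{-a..a::int}. G j) = (\<Sum>j\<in>{-a..a}. G (- j))"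
  by (rule sum.reindex_bij_witness[of _ uminus uminus]) auto

lemma Sk_neg: "Sk s (- m) = Sk s m"
proof -
  have "Sk s (- m) = (\<Sum>j\<in>{-int s..int s}. beta s j * beta s (j - m))"
    unfolding Sk_def by simp
  also have "\<dots> = (\<Sum>j\<in>{-int s..int s}. beta s (- j) * beta s (- j - m))"
    by (rule sum_sym_int)
  also have "\<dots> = Sk s m"
    unfolding Sk_def
  proof (rule sum.cong)
    fix j
    have "beta s (- j - m) = beta s (j + m)" using beta_neg[of s "j + m"] by (simp add: algebra_simps)
    then show "beta s (- j) * beta s (- j - m) = beta s j * beta s (j + m)" by (simp add: beta_neg)
  qed simp
  finally show ?thesis .
qed

lemma Ppol0_pos: "0 \<le> s \<Longrightarrow> 0 < Ppol s 0"
proof -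
  assume s: "0 \<le> s"
  have "0 \<le> s^5" "0 \<le> s^4" "0 \<le> s^3" "0 \<le> s^2" using s by auto
  then have "0 < 32 * s ^ 5 + 160 * s ^ 4 + 320 * s ^ 3 + 320 * s\<^sup>2 + 158 * s + 30" using s by linarith
  then show ?thesis unfolding Ppol_def by simp
qed

lemma Sk0_pos: "0 < Sk s 0"
  using Sk_closed[of 0 s] Ppol0_pos[of "real s"] by simp

lemma Q1_zero: "Q1 s 0 = 1"
  using Sk0_pos[of s] by (simp add: Q1_def)

lemma Q1_bounds:
  assumes r: "1 \<le> r" "3 * r \<le> s" and m: "\<bar>m\<bar> \<le> 2 * int r"
  shows "1 - 6 * real r ^ 2 / real s ^ 2 \<le> Q1 s m" "Q1 s m \<le> 1"
proof -
  define m' where "m' = \<bar>m\<bar>"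
  have QQ: "Q1 s m = Q1 s m'"
    unfolding Q1_def m'_def by (cases "m \<ge> 0") (auto simp: Sk_neg[of s "-m", simplified])
  have m'0: "0 \<le> m'" and m's: "m' \<le> int s" using m r by (auto simp: m'_def)
  have S1: "1 \<le> real s" using r by simp
  have P0: "0 < Ppol (real s) 0" using Ppol0_pos by simp
  have Qeq: "Q1 s m' = Ppol (real s) (real_of_int m') / Ppol (real s) 0"
    using Sk_closed[OF m'0 m's] Sk_closed[of 0 s] unfolding Q1_def
    by (metis (no_types, lifting) divide_divide_eq_right mult.commute nonzero_mult_div_cancel_left of_int_0 zero_neq_numeral order_refl of_nat_0_le_iff)
  show "Q1 s m \<le> 1"
    using Ppol_upper[of "real s" "real_of_int m'"] m'0 m's P0 unfolding QQ Qeq by simp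
  have m3: "3 * real_of_int m' \<le> 2 * real s" using m r by (simp add: m'_def)
  have "m' = 0 \<or> 1 \<le> m'" using m'0 by linarith
  then have m01: "real_of_int m' = 0 \<or> 1 \<le> real_of_int m'" by auto
  have low: "Ppol (real s) 0 * (2 * (real s)^2 - 3 * (real_of_int m')^2) \<le> 2 * (real s)^2 * Ppol (real s) (real_of_int m')"
    using Ppol_lower[OF S1 _ m3 m01] m'0 by simp
  have "real_of_int m' ^ 2 \<le> (2 * real r)^2"
    using m m'0 by (intro power_mono) (auto simp: m'_def)
  then have "1 - 6 * real r ^ 2 / real s ^ 2 \<le> 1 - 3 * (real_of_int m')^2 / (2 * (real s)^2)"
    using S1 by (simp add: field_simps power_mult_distrib)
  also have "\<dots> = Ppol (real s) 0 * (2 * (real s)^2 - 3 * (real_of_int m')^2) / (2 * (real s)^2 * Ppol (real s) 0)"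
    using P0 S1 by (simp add: field_simps)
  also have "\<dots> \<le> Ppol (real s) (real_of_int m') / Ppol (real s) 0"
    using low P0 S1 by (simp add: divide_le_eq field_simps)
  finally show "1 - 6 * real r ^ 2 / real s ^ 2 \<le> Q1 s m" unfolding QQ Qeq .
qed

lemma finite_vec_set:
  assumes "finite S"
  shows "finite {v::'a^'n. \<forall>i. v$i \<in> S}"
proof -
  have "{v::'a^'n. \<forall>i. v$i \<in> S} \<subseteq> vec_lambda ` (PiE UNIV (\<lambda>_. S))"
  proof
    fix v :: "'a^'n" assume "v \<in> {v. \<forall>i. v$i \<in> S}"
    then have "vec_nth v \<in> PiE UNIV (\<lambda>_. S)" by auto
    then show "v \<in> vec_lambda ` (PiE UNIV (\<lambda>_. S))" by (metis image_eqI vec_nth_inverse)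
  qed
  moreover have "finite (PiE (UNIV::'n set) (\<lambda>_. S))" using assms by (intro finite_PiE) auto
  ultimately show ?thesis by (rule finite_subset[OF _ finite_imageI])
qed

lemma sum_prod_vec:
  fixes g :: "'n::finite \<Rightarrow> 'a \<Rightarrow> 'c::comm_semiring_1"
  assumes "finite S"
  shows "(\<Sum>v\<in>{v::'a^'n. \<forall>i. v$i \<in> S}. \<Prod>i\<in>UNIV. g i (v$i)) = (\<Prod>i\<in>UNIV. \<Sum>x\<in>S. g i x)"
proof -
  have "(\<Prod>i\<in>UNIV. \<Sum>x\<in>S. g i x) = (\<Sum>h\<in>PiE UNIV (\<lambda>_. S). \<Prod>i\<in>UNIV. g i (h i))"
    using assms by (intro prod_sum_PiE) auto
  also have "\<dots> = (\<Sum>v\<in>{v::'a^'n. \<forall>i. v$i \<in> S}. \<Prod>i\<in>UNIV. g i (v$i))"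
    by (rule sum.reindex_bij_witness[of _ vec_nth vec_lambda]) (auto simp: vec_lambda_inverse)
  finally show ?thesis by simp
qed

lemma sup_norm_le: "sup_norm_int \<omega> \<le> t \<longleftrightarrow> (\<forall>i. \<bar>\<omega>$i\<bar> \<le> t)"
  unfolding sup_norm_int_def by (subst Max_le_iff) auto

lemma box_set: "{\<omega>::int^'n. sup_norm_int \<omega> \<le> t} = {\<omega>. \<forall>i. \<omega>$i \<in> {-t..t}}"
proof -
  have "\<And>a::int. \<bar>a\<bar> \<le> t \<longleftrightarrow> a \<in> {-t..t}" by auto
  then show ?thesis by (simp add: sup_norm_le)
qed

lemma finite_box: "finite {\<omega>::int^'n. sup_norm_int \<omega> \<le> t}"
  unfolding box_set by (rule finite_vec_set) simp

lemma char_fun_prod: "char_fun v x = (\<Prod>i\<in>UNIV. cis (2 * pi * (real_of_int (v$i) * x$i)))"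
  unfolding char_fun_def cis_conv_exp by (simp add: sum_distrib_left exp_sum algebra_simps)

definition grid :: "nat \<Rightarrow> (nat^'n) set" where
  "grid N = {j. \<forall>i. j$i \<in> {..<N}}"

definition gpt :: "nat \<Rightarrow> nat^'n \<Rightarrow> real^'n" where
  "gpt N j = (\<chi> i. real (j$i) / real N)"

lemma finite_grid: "finite (grid N)"
  unfolding grid_def by (rule finite_vec_set) simp

lemma gpt_in_cube: "j \<in> grid N \<Longrightarrow> gpt N j \<in> unit_cube"
proof -
  assume "j \<in> grid N"
  then have "\<And>i. j$i < N" by (auto simp: grid_def)
  then have "\<And>i. 0 \<le> real (j$i) / real N \<and> real (j$i) / real N \<le> 1"
    by (auto simp: divide_simps less_imp_le)
  then show ?thesis by (simp add: gpt_def unit_cube_def)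
qed

lemma cis_root_ne1:
  assumes "v \<noteq> 0" "\<bar>v\<bar> < int N"
  shows "cis (2 * pi * real_of_int v / real N) \<noteq> 1"
proof
  assume "cis (2 * pi * real_of_int v / real N) = 1"
  then have "cos (2 * pi * real_of_int v / real N) = 1" by (simp add: complex_eq_iff)
  then have "\<exists>n::int. 2 * pi * real_of_int v / real N = real_of_int n * 2 * pi" by (simp only: cos_one_2pi_int)
  then obtain n :: int where n: "2 * pi * real_of_int v / real N = real_of_int n * 2 * pi" by blast
  have N0: "0 < real N" using assms by simp
  then have "real_of_int v = real_of_int n * real N" using n by (simp add: field_simps)
  then have vn: "v = n * int N" by (metis of_int_eq_iff of_int_mult of_int_of_nat_eq)
  then have "\<bar>n\<bar> * int N < 1 * int N" using assms by (simp add: abs_mult)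
  then have "\<bar>n\<bar> < 1" by (meson mult_less_cancel_right_pos not_le of_nat_0_le_iff mult_right_mono) 
  then have "n = 0" by simp
  then show False using vn assms by simp
qed

lemma root_sum:
  assumes "0 < N" "\<bar>v\<bar> < int N"
  shows "(\<Sum>m\<in>{..<N}. cis (2 * pi * (real_of_int v * (real m / real N)))) = (if v = 0 then of_nat N else 0)"
proof (cases "v = 0")
  case True then show ?thesis by simp
next
  case False
  define z where "z = cis (2 * pi * real_of_int v / real N)"
  have zm: "cis (2 * pi * (real_of_int v * (real m / real N))) = z ^ m" for m
    unfolding z_def by (subst Complex.DeMoivre, intro arg_cong[where f=cis]) simp
  have z1: "z \<noteq> 1" using cis_root_ne1[OF False assms(2)] by (simp add: z_def)
  have zN: "z ^ N = 1"
  proof -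
    have "z ^ N = cis (2 * pi * real_of_int v)"
      unfolding z_def using assms(1) by (subst Complex.DeMoivre, intro arg_cong[where f=cis]) simp
    also have "\<dots> = 1" by (rule cis_multiple_2pi) simp
    finally show ?thesis .
  qed
  have "(\<Sum>m\<in>{..<N}. z ^ m) = 0" using geometric_sum[OF z1, of N] zN by simp
  moreover have "(\<Sum>m\<in>{..<N}. cis (2 * pi * (real_of_int v * (real m / real N)))) = (\<Sum>m\<in>{..<N}. z ^ m)"
    by (rule sum.cong) (simp_all only: zm)
  ultimately show ?thesis using False by simp
qed

lemma grid_sum:
  fixes v :: "int^'n"
  assumes "0 < N" "\<And>i. \<bar>v$i\<bar> < int N"
  shows "(\<Sum>j\<in>grid N. char_fun v (gpt N j)) = (if v = 0 then of_nat N ^ CARD('n) else 0)"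
proof -
  have "(\<Sum>j\<in>grid N. char_fun v (gpt N j)) = (\<Sum>j\<in>grid N. \<Prod>i\<in>UNIV. cis (2 * pi * (real_of_int (v$i) * (real (j$i) / real N))))"
    by (simp add: char_fun_prod gpt_def)
  also have "\<dots> = (\<Prod>i\<in>UNIV. \<Sum>m\<in>{..<N}. cis (2 * pi * (real_of_int (v$i) * (real m / real N))))"
    unfolding grid_def by (rule sum_prod_vec) simp
  also have "\<dots> = (\<Prod>i\<in>UNIV. (if v$i = 0 then of_nat N else 0))"
    by (intro prod.cong refl root_sum assms)
  also have "\<dots> = (if v = 0 then of_nat N ^ CARD('n) else 0)"
  proof (cases "v = 0")
    case True then show ?thesis by simp
  next
    case False
    then obtain i where i: "v$i \<noteq> 0" by (auto simp: vec_eq_iff)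
    have "(\<Prod>i\<in>UNIV. (if v$i = 0 then of_nat N else 0 :: complex)) = 0"
      by (rule prod_zero) (use i in auto)
    then show ?thesis using False by simp
  qed
  finally show ?thesis .
qed

lemma fourier_coeff_sum:
  fixes a :: "int^'n \<Rightarrow> complex"
  assumes "finite T"
  shows "fourier_coeff (\<lambda>x. \<Sum>\<omega>\<in>T. a \<omega> * char_fun \<omega> x) \<nu> = (if \<nu> \<in> T then a \<nu> else 0)"
proof -
  have "fourier_coeff (\<lambda>x. \<Sum>\<omega>\<in>T. a \<omega> * char_fun \<omega> x) \<nu> =
        integral unit_cube (\<lambda>x. \<Sum>\<omega>\<in>T. a \<omega> * char_fun (\<omega> - \<nu>) x)"
    unfolding fourier_coeff_def by (simp add: sum_distrib_right char_fun_minus_freq mult.assoc)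
  also have "\<dots> = (\<Sum>\<omega>\<in>T. integral unit_cube (\<lambda>x. a \<omega> * char_fun (\<omega> - \<nu>) x))"
    by (rule integral_sum[OF assms]) (auto simp: unit_cube_cbox intro!: integrable_on_mult_right char_fun_integrable)
  also have "\<dots> = (\<Sum>\<omega>\<in>T. a \<omega> * (if \<omega> = \<nu> then 1 else 0))"
    by (simp add: integral_mult_right integral_char_fun)
  also have "\<dots> = (\<Sum>\<omega>\<in>T. if \<omega> = \<nu> then a \<omega> else 0)"
    by (rule sum.cong) auto
  also have "\<dots> = (if \<nu> \<in> T then a \<nu> else 0)"
    using assms by (simp add: sum.delta')
  finally show ?thesis .
qed

lemma cnj_char_fun_mult: "cnj (char_fun k y) * char_fun l y = cnj (char_fun (k - l) y)"
  by (simp add: char_fun_minus_freq mult.commute)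

lemma pp_expand:
  fixes b :: "int^'n \<Rightarrow> complex"
  shows "(\<Sum>k\<in>K. b k * cnj (char_fun k y) * char_fun k x) * cnj (\<Sum>k\<in>K. b k * cnj (char_fun k y) * char_fun k x)
       = (\<Sum>k\<in>K. \<Sum>l\<in>K. b k * cnj (b l) * char_fun (k - l) x * cnj (char_fun (k - l) y))"
proof -
  have "(\<Sum>k\<in>K. b k * cnj (char_fun k y) * char_fun k x) * cnj (\<Sum>k\<in>K. b k * cnj (char_fun k y) * char_fun k x)
      = (\<Sum>k\<in>K. \<Sum>l\<in>K. (b k * cnj (char_fun k y) * char_fun k x) * cnj (b l * cnj (char_fun l y) * char_fun l x))"
    by (simp only: cnj_sum sum_product)
  also have "\<dots> = (\<Sum>k\<in>K. \<Sum>l\<in>K. b k * cnj (b l) * char_fun (k - l) x * cnj (char_fun (k - l) y))"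
    by (intro sum.cong refl) (simp add: char_fun_minus_freq mult_ac)
  finally show ?thesis .
qed

lemma eq_lemma: "(\<omega> - (k - l) = (0::'a::ab_group_add)) = (k = \<omega> + l)"
  by (auto simp: algebra_simps)

lemma key_identity:
  fixes A K :: "(int^'n) set" and H b :: "int^'n \<Rightarrow> complex" and x :: "real^'n"
  assumes fin: "finite A" "finite K"
    and N: "0 < N"
    and bnd: "\<And>\<omega> k l i. \<omega> \<in> A \<Longrightarrow> k \<in> K \<Longrightarrow> l \<in> K \<Longrightarrow> \<bar>\<omega>$i - k$i + l$i\<bar> < int N"
    and bz: "\<And>k. k \<notin> K \<Longrightarrow> b k = 0"
  shows "(\<Sum>j\<in>grid N. (\<Sum>\<omega>\<in>A. H \<omega> * char_fun \<omega> (gpt N j)) *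
           ((\<Sum>k\<in>K. b k * cnj (char_fun k (gpt N j)) * char_fun k x) * cnj (\<Sum>k\<in>K. b k * cnj (char_fun k (gpt N j)) * char_fun k x)))
         = of_nat N ^ CARD('n) * (\<Sum>\<omega>\<in>A. H \<omega> * (\<Sum>l\<in>K. b (\<omega> + l) * cnj (b l)) * char_fun \<omega> x)"
proof -
  define T where "T \<omega> k l = H \<omega> * (b k * cnj (b l) * char_fun (k - l) x)" for \<omega> k l
  have pt: "(\<Sum>\<omega>\<in>A. H \<omega> * char_fun \<omega> y) *
           ((\<Sum>k\<in>K. b k * cnj (char_fun k y) * char_fun k x) * cnj (\<Sum>k\<in>K. b k * cnj (char_fun k y) * char_fun k x))
        = (\<Sum>\<omega>\<in>A. \<Sum>k\<in>K. \<Sum>l\<in>K. T \<omega> k l * char_fun (\<omega> - (k - l)) y)" for y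
  proof -
    have "(\<Sum>\<omega>\<in>A. H \<omega> * char_fun \<omega> y) * (\<Sum>k\<in>K. \<Sum>l\<in>K. b k * cnj (b l) * char_fun (k - l) x * cnj (char_fun (k - l) y))
        = (\<Sum>\<omega>\<in>A. \<Sum>k\<in>K. \<Sum>l\<in>K. (H \<omega> * char_fun \<omega> y) * (b k * cnj (b l) * char_fun (k - l) x * cnj (char_fun (k - l) y)))"
      by (unfold sum_distrib_right, unfold sum_distrib_left) (rule refl)
    also have "\<dots> = (\<Sum>\<omega>\<in>A. \<Sum>k\<in>K. \<Sum>l\<in>K. T \<omega> k l * char_fun (\<omega> - (k - l)) y)"
      by (intro sum.cong refl) (simp add: T_def char_fun_minus_freq mult_ac)
    finally show ?thesis by (simp only: pp_expand)
  qed
  have "(\<Sum>j\<in>grid N. (\<Sum>\<omega>\<in>A. H \<omega> * char_fun \<omega> (gpt N j)) *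
           ((\<Sum>k\<in>K. b k * cnj (char_fun k (gpt N j)) * char_fun k x) * cnj (\<Sum>k\<in>K. b k * cnj (char_fun k (gpt N j)) * char_fun k x)))
      = (\<Sum>j\<in>grid N. \<Sum>\<omega>\<in>A. \<Sum>k\<in>K. \<Sum>l\<in>K. T \<omega> k l * char_fun (\<omega> - (k - l)) (gpt N j))"
    by (simp only: pt)
  also have "\<dots> = (\<Sum>\<omega>\<in>A. \<Sum>j\<in>grid N. \<Sum>k\<in>K. \<Sum>l\<in>K. T \<omega> k l * char_fun (\<omega> - (k - l)) (gpt N j))"
    by (rule sum.swap)
  also have "\<dots> = (\<Sum>\<omega>\<in>A. \<Sum>k\<in>K. \<Sum>j\<in>grid N. \<Sum>l\<in>K. T \<omega> k l * char_fun (\<omega> - (k - l)) (gpt N j))"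
    by (intro sum.cong refl sum.swap)
  also have "\<dots> = (\<Sum>\<omega>\<in>A. \<Sum>k\<in>K. \<Sum>l\<in>K. \<Sum>j\<in>grid N. T \<omega> k l * char_fun (\<omega> - (k - l)) (gpt N j))"
    by (intro sum.cong refl sum.swap)
  also have "\<dots> = (\<Sum>\<omega>\<in>A. \<Sum>k\<in>K. \<Sum>l\<in>K. T \<omega> k l * (if \<omega> - (k - l) = 0 then of_nat N ^ CARD('n) else 0))"
  proof (intro sum.cong refl)
    fix \<omega> k l assume "\<omega> \<in> A" "k \<in> K" "l \<in> K"
    then have "\<And>i. \<bar>(\<omega> - (k - l))$i\<bar> < int N" using bnd by (simp add: algebra_simps)
    then show "(\<Sum>j\<in>grid N. T \<omega> k l * char_fun (\<omega> - (k - l)) (gpt N j)) = T \<omega> k l * (if \<omega> - (k - l) = 0 then of_nat N ^ CARD('n) else 0)"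
      by (simp add: sum_distrib_left[symmetric] grid_sum[OF N])
  qed
  also have "\<dots> = (\<Sum>\<omega>\<in>A. \<Sum>l\<in>K. \<Sum>k\<in>K. if k = \<omega> + l then of_nat N ^ CARD('n) * (H \<omega> * b k * cnj (b l) * char_fun \<omega> x) else 0)"
  proof (rule sum.cong[OF refl])
    fix \<omega>
    show "(\<Sum>k\<in>K. \<Sum>l\<in>K. T \<omega> k l * (if \<omega> - (k - l) = 0 then of_nat N ^ CARD('n) else 0))
      = (\<Sum>l\<in>K. \<Sum>k\<in>K. if k = \<omega> + l then of_nat N ^ CARD('n) * (H \<omega> * b k * cnj (b l) * char_fun \<omega> x) else 0)"
      by (subst sum.swap) (intro sum.cong refl, simp add: T_def eq_lemma mult_ac)
  qed
  also have "\<dots> = (\<Sum>\<omega>\<in>A. \<Sum>l\<in>K. of_nat N ^ CARD('n) * (H \<omega> * b (\<omega> + l) * cnj (b l) * char_fun \<omega> x))"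
  proof (rule sum.cong[OF refl], rule sum.cong[OF refl])
    fix \<omega> l
    show "(\<Sum>k\<in>K. if k = \<omega> + l then of_nat N ^ CARD('n) * (H \<omega> * b k * cnj (b l) * char_fun \<omega> x) else 0)
        = of_nat N ^ CARD('n) * (H \<omega> * b (\<omega> + l) * cnj (b l) * char_fun \<omega> x)"
      using fin bz[of "\<omega> + l"] by (simp add: sum.delta')
  qed
  also have "\<dots> = of_nat N ^ CARD('n) * (\<Sum>\<omega>\<in>A. H \<omega> * (\<Sum>l\<in>K. b (\<omega> + l) * cnj (b l)) * char_fun \<omega> x)"
    by (simp add: sum_distrib_left sum_distrib_right mult_ac)
  finally show ?thesis .
qed

definition bk :: "nat \<Rightarrow> int^'n \<Rightarrow> real" where
  "bk s k = (\<Prod>i\<in>UNIV. beta s (k$i))"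

definition Kset :: "nat \<Rightarrow> (int^'n) set" where
  "Kset s = {k. \<forall>i. k$i \<in> {- int s..int s}}"

definition Qv :: "nat \<Rightarrow> int^'n \<Rightarrow> real" where
  "Qv s \<omega> = (\<Prod>i\<in>UNIV. Q1 s (\<omega>$i))"

lemma finite_Kset: "finite (Kset s)"
  unfolding Kset_def by (rule finite_vec_set) simp

lemma Kset_eq: "Kset s = {k. sup_norm_int k \<le> int s}"
  unfolding Kset_def box_set ..

lemma bk_zero: "k \<notin> Kset s \<Longrightarrow> bk s k = 0"
proof -
  assume "k \<notin> Kset s"
  then obtain i where "k$i \<notin> {- int s..int s}" by (auto simp: Kset_def)
  then have "beta s (k$i) = 0" by (auto simp: beta_def)
  then show "bk s k = 0" unfolding bk_def by (intro prod_zero) auto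
qed

lemma conv_bk: "(\<Sum>l\<in>Kset s. bk s (\<omega> + l) * bk s l) = (\<Prod>i\<in>UNIV. Sk s (\<omega>$i))"
proof -
  have "(\<Sum>l\<in>Kset s. bk s (\<omega> + l) * bk s l) = (\<Sum>l\<in>Kset s. \<Prod>i\<in>UNIV. beta s (l$i) * beta s (l$i + \<omega>$i))"
    unfolding bk_def by (intro sum.cong refl) (simp add: prod.distrib[symmetric] mult.commute add.commute)
  also have "\<dots> = (\<Prod>i\<in>UNIV. \<Sum>x\<in>{- int s..int s}. beta s x * beta s (x + \<omega>$i))"
    unfolding Kset_def by (rule sum_prod_vec) simp
  also have "\<dots> = (\<Prod>i\<in>UNIV. Sk s (\<omega>$i))" unfolding Sk_def ..
  finally show ?thesis .
qed

lemma conv_Qv: "(\<Sum>l\<in>Kset s. bk s (\<omega> + l) * bk s l) = Sk s 0 ^ CARD('n) * Qv s (\<omega>::int^'n)"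
proof -
  have e: "\<And>m. Sk s m = Sk s 0 * Q1 s m" using Sk0_pos[of s] by (simp add: Q1_def)
  have "(\<Sum>l\<in>Kset s. bk s (\<omega> + l) * bk s l) = (\<Prod>i\<in>UNIV. Sk s (\<omega>$i))" by (rule conv_bk)
  also have "(\<Prod>i\<in>UNIV. Sk s (\<omega>$i)) = (\<Prod>i\<in>(UNIV::'n set). Sk s 0 * Q1 s (\<omega>$i))"
    by (rule prod.cong[OF refl], rule e)
  also have "\<dots> = Sk s 0 ^ CARD('n) * Qv s \<omega>" by (simp add: prod.distrib Qv_def)
  finally show ?thesis .
qed

lemma Qv_zero: "Qv s 0 = 1"
  by (simp add: Qv_def Q1_zero)

lemma Qv_bounds:
  fixes \<omega> :: "int^'n"
  assumes r: "1 \<le> r" "3 * r \<le> s" and w: "sup_norm_int \<omega> \<le> 2 * int r"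
  shows "(1 - 6 * real r ^ 2 / real s ^ 2) ^ CARD('n) \<le> Qv s \<omega>" "Qv s \<omega> \<le> 1"
proof -
  let ?a = "1 - 6 * real r ^ 2 / real s ^ 2"
  have wi: "\<And>i. \<bar>\<omega>$i\<bar> \<le> 2 * int r" using w by (simp add: sup_norm_le)
  have a0: "0 \<le> ?a"
  proof -
    have "3 * real r \<le> real s" using r by linarith
    then have "(3 * real r) ^ 2 \<le> real s ^ 2" by (intro power_mono) auto
    then have "9 * real r ^ 2 \<le> real s ^ 2" by (simp add: power_mult_distrib)
    moreover have "0 < real s" using r by simp
    moreover have "0 \<le> real r ^ 2" by simp
    ultimately have "6 * real r ^ 2 \<le> real s ^ 2" "0 < real s ^ 2" by (linarith, simp)
    then show ?thesis by (simp add: field_simps)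
  qed
  have b1: "\<And>i. ?a \<le> Q1 s (\<omega>$i)" using Q1_bounds(1)[OF r wi] .
  have b2: "\<And>i. Q1 s (\<omega>$i) \<le> 1" using Q1_bounds(2)[OF r wi] .
  have "(\<Prod>i\<in>(UNIV::'n set). ?a) \<le> Qv s \<omega>" unfolding Qv_def
    by (rule prod_mono) (use a0 b1 in auto)
  then show "?a ^ CARD('n) \<le> Qv s \<omega>" by simp
  have b0: "\<And>i. 0 \<le> Q1 s (\<omega>$i)" by (rule order_trans[OF a0 b1])
  have "Qv s \<omega> \<le> (\<Prod>i\<in>(UNIV::'n set). 1)" unfolding Qv_def
    by (rule prod_mono) (use b0 b2 in simp)
  then show "Qv s \<omega> \<le> 1" by simp
qed

lemma zero_in_cube: "(0::real^'n) \<in> unit_cube"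
  by (simp add: unit_cube_def)

lemma sum_list_map_distinct:
  assumes "distinct js"
  shows "sum_list (map (\<lambda>q. g q) (map qf js)) = (\<Sum>j\<in>set js. g (qf j))"
  using assms by (simp add: sum_list_distinct_conv_sum_set o_def)

lemma main_bound:
  fixes f :: "real^'n \<Rightarrow> real" and r s :: nat and Fc :: "int^'n \<Rightarrow> complex"
  assumes r: "1 \<le> r" "3 * r \<le> s"
    and A_def: "A = {\<omega>::int^'n. sup_norm_int \<omega> \<le> 2 * int r}"
    and frep: "\<And>x. complex_of_real (f x) = (\<Sum>\<omega>\<in>A. Fc \<omega> * char_fun \<omega> x)"
    and Phi_def: "Phi = (\<Sum>\<omega>\<in>A - {0}. cmod (Fc \<omega>))"
  shows "0 \<le> f_min f - c_star f s \<and> f_min f - c_star f s \<le> Phi * (inverse ((1 - 6 * real r ^ 2 / real s ^ 2) ^ CARD('n)) - 1)"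
proof -
  define d where "d = CARD('n)"
  have finA: "finite A" unfolding A_def by (rule finite_box)
  have A0: "0 \<in> A" unfolding A_def by (simp add: sup_norm_le)
  have Ai: "\<And>\<omega> i. \<omega> \<in> A \<Longrightarrow> \<bar>\<omega>$i\<bar> \<le> 2 * int r" unfolding A_def by (simp add: sup_norm_le)
  define M where "M = (\<Sum>\<omega>\<in>A. cmod (Fc \<omega>))"
  have fb: "\<bar>f x\<bar> \<le> M" for x
  proof -
    have "\<bar>f x\<bar> = cmod (complex_of_real (f x))" by simp
    also have "\<dots> \<le> (\<Sum>\<omega>\<in>A. cmod (Fc \<omega> * char_fun \<omega> x))" unfolding frep by (rule norm_sum)
    also have "\<dots> = M" unfolding M_def by (simp add: norm_mult)
    finally show ?thesis .
  qed
  have fb': "- M \<le> f x" for x using fb[of x] by linarith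
  have bddb: "bdd_below (f ` unit_cube)"
    by (rule bdd_belowI[of _ "- M"]) (use fb' in auto)
  have fmin_le: "\<And>y. y \<in> unit_cube \<Longrightarrow> f_min f \<le> f y"
    unfolding f_min_def by (rule cInf_lower) (use bddb in auto)
  define a where "a = 1 - 6 * real r ^ 2 / real s ^ 2"
  have apos: "0 < a"
  proof -
    have "3 * real r \<le> real s" using r by linarith
    then have "(3 * real r) ^ 2 \<le> real s ^ 2" by (intro power_mono) auto
    then have "9 * real r ^ 2 \<le> real s ^ 2" by (simp add: power_mult_distrib)
    moreover have "0 < real s" using r by simp
    moreover have "0 < real r ^ 2" using r by simp
    ultimately have "6 * real r ^ 2 < real s ^ 2" "0 < real s ^ 2" by (linarith, simp)
    then show ?thesis unfolding a_def by (simp add: field_simps)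
  qed
  have adpos: "0 < a ^ d" using apos by simp
  define \<delta> where "\<delta> = inverse (a ^ d) - 1"
  define c where "c = f_min f - Phi * \<delta>"
  define Q :: "int^'n \<Rightarrow> real" where "Q = Qv s"
  have Qb: "\<And>\<omega>. \<omega> \<in> A \<Longrightarrow> a ^ d \<le> Q \<omega> \<and> Q \<omega> \<le> 1"
    unfolding Q_def a_def d_def A_def using Qv_bounds[OF r] by auto
  have Qpos: "\<And>\<omega>. \<omega> \<in> A \<Longrightarrow> 0 < Q \<omega>" using Qb adpos by (meson less_le_trans)
  have Q0: "Q 0 = 1" unfolding Q_def by (rule Qv_zero)
  define H where "H \<omega> = (Fc \<omega> - (if \<omega> = 0 then complex_of_real c else 0)) / complex_of_real (Q \<omega>)" for \<omega>
  define Z where "Z = Sk s 0"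
  have Zpos: "0 < Z" unfolding Z_def by (rule Sk0_pos)
  define N where "N = 2 * r + 2 * s + 1"
  have Npos: "0 < N" unfolding N_def by simp
  define K where "K = (Kset s :: (int^'n) set)"
  have finK: "finite K" unfolding K_def by (rule finite_Kset)
  define b where "b k = complex_of_real (bk s k)" for k :: "int^'n"
  define hv where "hv y = (\<Sum>\<omega>\<in>A. H \<omega> * char_fun \<omega> y)" for y
  define P where "P y x = (\<Sum>k\<in>K. b k * cnj (char_fun k y) * char_fun k x)" for y x
  have ident: "(\<Sum>j\<in>grid N. hv (gpt N j) * (P (gpt N j) x * cnj (P (gpt N j) x)))
        = of_nat N ^ d * complex_of_real (Z ^ d) * (complex_of_real (f x) - complex_of_real c)" for x
  proof -
    have bnd: "\<bar>\<omega>$i - k$i + l$i\<bar> < int N" if "\<omega> \<in> A" "k \<in> K" "l \<in> K" for \<omega> k l i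
    proof -
      have "\<bar>\<omega>$i\<bar> \<le> 2 * int r" using Ai that by simp
      moreover have "k$i \<in> {- int s..int s}" "l$i \<in> {- int s..int s}" using that(2,3) unfolding K_def Kset_def by blast+
      then have "\<bar>k$i\<bar> \<le> int s" "\<bar>l$i\<bar> \<le> int s" by auto
      ultimately show ?thesis unfolding N_def by linarith
    qed
    have bz: "b k = 0" if "k \<notin> K" for k using that bk_zero unfolding b_def K_def by simp
    have "(\<Sum>j\<in>grid N. hv (gpt N j) * (P (gpt N j) x * cnj (P (gpt N j) x)))
       = of_nat N ^ CARD('n) * (\<Sum>\<omega>\<in>A. H \<omega> * (\<Sum>l\<in>K. b (\<omega> + l) * cnj (b l)) * char_fun \<omega> x)"
      unfolding hv_def P_def by (rule key_identity[OF finA finK Npos bnd bz])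
    also have "(\<Sum>\<omega>\<in>A. H \<omega> * (\<Sum>l\<in>K. b (\<omega> + l) * cnj (b l)) * char_fun \<omega> x)
        = (\<Sum>\<omega>\<in>A. complex_of_real (Z ^ d) * ((Fc \<omega> - (if \<omega> = 0 then complex_of_real c else 0)) * char_fun \<omega> x))"
    proof (rule sum.cong[OF refl])
      fix \<omega> assume w: "\<omega> \<in> A"
      have "(\<Sum>l\<in>K. b (\<omega> + l) * cnj (b l)) = complex_of_real (\<Sum>l\<in>K. bk s (\<omega> + l) * bk s l)"
        unfolding b_def by simp
      also have "\<dots> = complex_of_real (Z ^ d * Q \<omega>)"
        unfolding K_def Z_def d_def Q_def conv_Qv ..
      finally have e: "(\<Sum>l\<in>K. b (\<omega> + l) * cnj (b l)) = complex_of_real (Z ^ d * Q \<omega>)" .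
      have "Q \<omega> \<noteq> 0" using Qpos[OF w] by simp
      then show "H \<omega> * (\<Sum>l\<in>K. b (\<omega> + l) * cnj (b l)) * char_fun \<omega> x
          = complex_of_real (Z ^ d) * ((Fc \<omega> - (if \<omega> = 0 then complex_of_real c else 0)) * char_fun \<omega> x)"
        unfolding e H_def by (simp add: field_simps)
    qed
    also have "\<dots> = complex_of_real (Z ^ d) * (complex_of_real (f x) - complex_of_real c)"
    proof -
      have "(\<Sum>\<omega>\<in>A. (Fc \<omega> - (if \<omega> = 0 then complex_of_real c else 0)) * char_fun \<omega> x)
          = (\<Sum>\<omega>\<in>A. Fc \<omega> * char_fun \<omega> x) - (\<Sum>\<omega>\<in>A. if \<omega> = 0 then complex_of_real c else 0)"
      proof -
        have "(\<Sum>\<omega>\<in>A. (Fc \<omega> - (if \<omega> = 0 then complex_of_real c else 0)) * char_fun \<omega> x)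
            = (\<Sum>\<omega>\<in>A. Fc \<omega> * char_fun \<omega> x - (if \<omega> = 0 then complex_of_real c else 0))"
          by (rule sum.cong[OF refl]) (simp add: left_diff_distrib)
        then show ?thesis by (simp only: sum_subtractf)
      qed
      also have "\<dots> = complex_of_real (f x) - complex_of_real c"
        using finA A0 by (simp add: frep[symmetric] sum.delta)
      finally show ?thesis by (simp add: sum_distrib_left[symmetric])
    qed
    finally show ?thesis unfolding d_def by (simp add: mult.assoc)
  qed
  have hvpos: "0 \<le> Re (hv y)" if y: "y \<in> unit_cube" for y
  proof -
    define E where "E \<omega> = H \<omega> - (Fc \<omega> - (if \<omega> = 0 then complex_of_real c else 0))" for \<omega>
    have hsplit: "hv y = (complex_of_real (f y) - complex_of_real c) + (\<Sum>\<omega>\<in>A. E \<omega> * char_fun \<omega> y)"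
    proof -
      have "hv y = (\<Sum>\<omega>\<in>A. (Fc \<omega> - (if \<omega> = 0 then complex_of_real c else 0)) * char_fun \<omega> y) + (\<Sum>\<omega>\<in>A. E \<omega> * char_fun \<omega> y)"
        unfolding hv_def E_def by (simp add: sum.distrib[symmetric] algebra_simps)
      also have "(\<Sum>\<omega>\<in>A. (Fc \<omega> - (if \<omega> = 0 then complex_of_real c else 0)) * char_fun \<omega> y)
          = (\<Sum>\<omega>\<in>A. Fc \<omega> * char_fun \<omega> y) - (\<Sum>\<omega>\<in>A. if \<omega> = 0 then complex_of_real c else 0)"
      proof -
        have "(\<Sum>\<omega>\<in>A. (Fc \<omega> - (if \<omega> = 0 then complex_of_real c else 0)) * char_fun \<omega> y)
            = (\<Sum>\<omega>\<in>A. Fc \<omega> * char_fun \<omega> y - (if \<omega> = 0 then complex_of_real c else 0))"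
          by (rule sum.cong[OF refl]) (simp add: left_diff_distrib)
        then show ?thesis by (simp only: sum_subtractf)
      qed
      also have "\<dots> = complex_of_real (f y) - complex_of_real c"
        using finA A0 by (simp add: frep[symmetric] sum.delta)
      finally show ?thesis .
    qed
    have Eb: "cmod (E \<omega>) \<le> (if \<omega> = 0 then 0 else cmod (Fc \<omega>) * \<delta>)" if w: "\<omega> \<in> A" for \<omega>
    proof (cases "\<omega> = 0")
      case True then show ?thesis by (simp add: E_def H_def Q0)
    next
      case False
      have q: "a ^ d \<le> Q \<omega>" "Q \<omega> \<le> 1" "0 < Q \<omega>" using Qb[OF w] Qpos[OF w] by auto
      have "E \<omega> = Fc \<omega> * complex_of_real (1 / Q \<omega> - 1)"
        using False q by (simp add: E_def H_def field_simps)
      then have "cmod (E \<omega>) = cmod (Fc \<omega>) * \<bar>1 / Q \<omega> - 1\<bar>" by (simp only: norm_mult norm_of_real)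
      also have "\<bar>1 / Q \<omega> - 1\<bar> = 1 / Q \<omega> - 1" using q by (simp add: field_simps)
      also have "1 / Q \<omega> - 1 \<le> \<delta>"
      proof -
        have "1 / Q \<omega> \<le> 1 / a ^ d" using q adpos by (intro divide_left_mono) auto
        then show ?thesis unfolding \<delta>_def by (simp add: field_simps)
      qed
      finally show ?thesis using False by (simp add: mult_left_mono)
    qed
    have "cmod (\<Sum>\<omega>\<in>A. E \<omega> * char_fun \<omega> y) \<le> (\<Sum>\<omega>\<in>A. cmod (E \<omega> * char_fun \<omega> y))" by (rule norm_sum)
    also have "\<dots> = (\<Sum>\<omega>\<in>A. cmod (E \<omega>))" by (simp add: norm_mult)
    also have "\<dots> \<le> (\<Sum>\<omega>\<in>A. if \<omega> = 0 then 0 else cmod (Fc \<omega>) * \<delta>)" by (rule sum_mono) (rule Eb)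
    also have "\<dots> = (\<Sum>\<omega>\<in>A - {0}. cmod (Fc \<omega>) * \<delta>)"
      by (rule sum.mono_neutral_cong_right) (use finA in auto)
    also have "\<dots> = Phi * \<delta>" unfolding Phi_def by (simp add: sum_distrib_right)
    finally have nb: "cmod (\<Sum>\<omega>\<in>A. E \<omega> * char_fun \<omega> y) \<le> Phi * \<delta>" .
    have "Re (hv y) = f y - c + Re (\<Sum>\<omega>\<in>A. E \<omega> * char_fun \<omega> y)" unfolding hsplit by simp
    moreover have "- cmod (\<Sum>\<omega>\<in>A. E \<omega> * char_fun \<omega> y) \<le> Re (\<Sum>\<omega>\<in>A. E \<omega> * char_fun \<omega> y)"
      using abs_Re_le_cmod[of "\<Sum>\<omega>\<in>A. E \<omega> * char_fun \<omega> y"] by linarith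
    moreover have "f_min f \<le> f y" using fmin_le[OF y] .
    ultimately show ?thesis using nb unfolding c_def by linarith
  qed
  define w where "w j = Re (hv (gpt N j)) / (real N ^ d * Z ^ d)" for j
  have wnn: "0 \<le> w j" if "j \<in> grid N" for j
    unfolding w_def using hvpos[OF gpt_in_cube[OF that]] Zpos Npos by simp
  define qf where "qf j x = complex_of_real (sqrt (w j)) * P (gpt N j) x" for j x
  obtain js :: "(nat^'n) list" where js: "distinct js" "set js = grid N" using finite_distinct_list[OF finite_grid] by blast
  define qs :: "(real^'n \<Rightarrow> complex) list" where "qs = map qf js"
  have deg: "\<forall>q\<in>set qs. trig_poly_deg s q"
  proof
    fix q assume "q \<in> set qs"
    then obtain j where q: "q = qf j" unfolding qs_def by auto
    show "trig_poly_deg s q" unfolding trig_poly_deg_def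
    proof (intro exI[of _ "\<lambda>k. complex_of_real (sqrt (w j)) * b k * cnj (char_fun k (gpt N j))"])
      show "q = (\<lambda>x. \<Sum>\<omega>\<in>{\<omega>. sup_norm_int \<omega> \<le> int s}. complex_of_real (sqrt (w j)) * b \<omega> * cnj (char_fun \<omega> (gpt N j)) * char_fun \<omega> x)"
        unfolding q qf_def P_def K_def Kset_eq[symmetric] by (simp add: sum_distrib_left mult_ac)
    qed
  qed
  have sos: "f x - c = (\<Sum>q\<leftarrow>qs. (cmod (q x))^2)" for x :: "real^'n"
  proof -
    have "(\<Sum>q\<leftarrow>qs. (cmod (q x))^2) = (\<Sum>j\<in>grid N. (cmod (qf j x))^2)"
      unfolding qs_def using js by (simp add: sum_list_distinct_conv_sum_set o_def)
    also have "\<dots> = (\<Sum>j\<in>grid N. w j * (cmod (P (gpt N j) x))^2)"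
      by (rule sum.cong[OF refl]) (simp add: qf_def norm_mult power_mult_distrib wnn)
    also have "\<dots> = (\<Sum>j\<in>grid N. Re (hv (gpt N j)) * (cmod (P (gpt N j) x))^2) / (real N ^ d * Z ^ d)"
      unfolding w_def by (simp add: sum_divide_distrib)
    also have "(\<Sum>j\<in>grid N. Re (hv (gpt N j)) * (cmod (P (gpt N j) x))^2)
        = Re (\<Sum>j\<in>grid N. hv (gpt N j) * (P (gpt N j) x * cnj (P (gpt N j) x)))"
      by (simp add: Re_sum complex_norm_square[symmetric])
    also have "\<dots> = real N ^ d * Z ^ d * (f x - c)"
      unfolding ident by simp
    finally show ?thesis using Zpos Npos by simp
  qed
  define Cset where "Cset = {c. \<exists>qs :: (real^'n \<Rightarrow> complex) list.
      (\<forall>q\<in>set qs. trig_poly_deg s q) \<and>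
      (\<forall>x\<in>unit_cube. f x - c = (\<Sum>q\<leftarrow>qs. (cmod (q x))^2))}"
  have cin: "c \<in> Cset" unfolding Cset_def using deg sos by blast
  have Cle: "c' \<le> f y" if "c' \<in> Cset" "y \<in> unit_cube" for c' y
  proof -
    have "\<exists>qs' :: (real^'n \<Rightarrow> complex) list. (\<forall>q\<in>set qs'. trig_poly_deg s q) \<and> (\<forall>x\<in>unit_cube. f x - c' = (\<Sum>q\<leftarrow>qs'. (cmod (q x))^2))"
      using that(1) unfolding Cset_def by simp
    then obtain qs' :: "(real^'n \<Rightarrow> complex) list" where "\<forall>x\<in>unit_cube. f x - c' = (\<Sum>q\<leftarrow>qs'. (cmod (q x))^2)"
      by blast
    then have "f y - c' = (\<Sum>q\<leftarrow>qs'. (cmod (q y))^2)" using that(2) by blast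
    moreover have "0 \<le> (\<Sum>q\<leftarrow>qs'. (cmod (q y))^2)" by (rule sum_list_nonneg) auto
    ultimately show ?thesis by linarith
  qed
  have cstar: "c_star f s = Sup Cset" unfolding c_star_def Cset_def ..
  have bdd: "bdd_above Cset" by (rule bdd_aboveI[of _ "f 0"]) (use Cle zero_in_cube in blast)
  have c_le: "c \<le> c_star f s" unfolding cstar by (rule cSup_upper[OF cin bdd])
  have cs_le: "c_star f s \<le> f_min f" unfolding cstar
  proof (rule cSup_least)
    show "Cset \<noteq> {}" using cin by blast
    fix c' assume c': "c' \<in> Cset"
    show "c' \<le> f_min f" unfolding f_min_def
      by (rule cInf_greatest) (use zero_in_cube Cle[OF c'] in auto)
  qed
  show ?thesis using c_le cs_le unfolding c_def \<delta>_def a_def d_def by simp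
qed

lemma phi_deriv:
  "((\<lambda>u::real. inverse ((1 - u) ^ d)) has_real_derivative real d) (at 0)"
proof -
  have "((\<lambda>u::real. inverse ((1 - u) ^ d)) has_real_derivative
        - (inverse ((1 - 0) ^ d) * ((real d * (1 - 0) ^ (d - 1) * (0 - 1))) * inverse ((1 - 0) ^ d))) (at 0)"
    by (rule derivative_eq_intros refl | simp)+
  then show ?thesis by simp
qed

lemma ratio_lim:
  fixes a :: real and d :: nat
  assumes a: "0 < a" and d: "0 < d"
  shows "((\<lambda>s::nat. (inverse ((1 - a / real s ^ 2) ^ d) - 1) / (a * real d / real s ^ 2)) \<longlongrightarrow> 1) at_top"
proof -
  define u where "u = (\<lambda>s::nat. a / real s ^ 2)"
  have q: "((\<lambda>h::real. (inverse ((1 - h) ^ d) - 1) / h) \<longlongrightarrow> real d) (at 0)"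
    using phi_deriv[of d] unfolding has_field_derivative_iff by simp
  have u0: "filterlim u (at 0) at_top"
  proof (rule tendsto_imp_filterlim_at_right[THEN filterlim_mono])
    show "(u \<longlongrightarrow> 0) at_top" unfolding u_def
      by real_asymp
    show "\<forall>\<^sub>F x in at_top. 0 < u x" unfolding u_def using a
      by (auto intro!: eventually_at_top_linorderI[of 1])
  qed (simp_all add: at_within_le_at)
  have "((\<lambda>s. (inverse ((1 - u s) ^ d) - 1) / u s) \<longlongrightarrow> real d) at_top"
    using filterlim_compose[OF q u0] by (simp add: o_def)
  then have "((\<lambda>s. ((inverse ((1 - u s) ^ d) - 1) / u s) / real d) \<longlongrightarrow> real d / real d) at_top"
    by (intro tendsto_divide) (use d in auto)
  then have L: "((\<lambda>s. ((inverse ((1 - u s) ^ d) - 1) / u s) / real d) \<longlongrightarrow> 1) at_top"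
    using d by simp
  show ?thesis
  proof (rule Lim_transform_eventually[OF L])
    show "\<forall>\<^sub>F s in at_top. (inverse ((1 - u s) ^ d) - 1) / u s / real d = (inverse ((1 - a / real s ^ 2) ^ d) - 1) / (a * real d / real s ^ 2)"
      by (intro eventually_at_top_linorderI[of 1]) (simp add: u_def field_simps)
  qed
qed

lemma asym_main:
  fixes Phi :: real and r d :: nat
  assumes "1 \<le> r" "0 < d"
  shows "(\<lambda>s::nat. Phi * (inverse ((1 - 6 * real r ^ 2 / real s ^ 2) ^ d) - 1))
         \<sim>[at_top] (\<lambda>s::nat. Phi * (6 * real r ^ 2 * real d / real s ^ 2))"
proof (cases "Phi = 0")
  case True then show ?thesis by simp
next
  case False
  have a: "0 < 6 * real r ^ 2" using assms by simp
  have "(\<lambda>s::nat. inverse ((1 - 6 * real r ^ 2 / real s ^ 2) ^ d) - 1) \<sim>[at_top] (\<lambda>s::nat. 6 * real r ^ 2 * real d / real s ^ 2)"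
    by (rule asymp_equivI') (use ratio_lim[OF a assms(2)] in simp)
  then show ?thesis by (intro asymp_equiv_intros)
qed

lemma sum_split_const:
  fixes Fc :: "int^'n \<Rightarrow> complex"
  assumes "finite A" "0 \<in> A"
  shows "(\<Sum>\<omega>\<in>A. (Fc \<omega> - (if \<omega> = 0 then C else 0)) * char_fun \<omega> x) = (\<Sum>\<omega>\<in>A. Fc \<omega> * char_fun \<omega> x) - C"
proof -
  have "(\<Sum>\<omega>\<in>A. (Fc \<omega> - (if \<omega> = 0 then C else 0)) * char_fun \<omega> x)
      = (\<Sum>\<omega>\<in>A. Fc \<omega> * char_fun \<omega> x - (if \<omega> = 0 then C else 0))"
    by (rule sum.cong[OF refl]) (simp add: left_diff_distrib)
  also have "\<dots> = (\<Sum>\<omega>\<in>A. Fc \<omega> * char_fun \<omega> x) - (\<Sum>\<omega>\<in>A. if \<omega> = 0 then C else 0)"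
    by (rule sum_subtractf)
  also have "\<dots> = (\<Sum>\<omega>\<in>A. Fc \<omega> * char_fun \<omega> x) - C" using assms by (simp add: sum.delta)
  finally show ?thesis .
qed

theorem theorem1:
  fixes f :: "real^'n \<Rightarrow> real" and r :: nat
  assumes "r \<ge> 1"
    and "trig_poly (\<lambda>x. complex_of_real (f x))"
    and "\<And>\<omega>. sup_norm_int \<omega> > 2 * int r \<Longrightarrow> fourier_coeff (\<lambda>x. complex_of_real (f x)) \<omega> = 0"
  defines "fbar \<equiv> fourier_coeff (\<lambda>x. complex_of_real (f x)) 0"
  defines "B \<equiv> (\<lambda>s::nat. F_norm (\<lambda>x. complex_of_real (f x) - fbar) *
                 (inverse ((1 - 6 * real r ^ 2 / real s ^ 2) ^ CARD('n)) - 1))"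
  shows "(\<forall>s::nat. s \<ge> 3 * r \<longrightarrow>
            0 \<le> f_min f - c_star f s \<and> f_min f - c_star f s \<le> B s)
         \<and> B \<sim>[at_top] (\<lambda>s::nat. F_norm (\<lambda>x. complex_of_real (f x) - fbar) *
                 (6 * real r ^ 2 * real CARD('n) / real s ^ 2))"
proof -
  define Fc where "Fc = fourier_coeff (\<lambda>x. complex_of_real (f x))"
  obtain S :: nat and a :: "int^'n \<Rightarrow> complex" where rep:
    "(\<lambda>x. complex_of_real (f x)) = (\<lambda>x. \<Sum>\<omega>\<in>{\<omega>. sup_norm_int \<omega> \<le> int S}. a \<omega> * char_fun \<omega> x)"
    using assms(2) unfolding trig_poly_def trig_poly_deg_def by blast
  define KS where "KS = {\<omega>::int^'n. sup_norm_int \<omega> \<le> int S}"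
  have finKS: "finite KS" unfolding KS_def by (rule finite_box)
  have Fca: "Fc \<nu> = (if \<nu> \<in> KS then a \<nu> else 0)" for \<nu>
    unfolding Fc_def rep KS_def by (rule fourier_coeff_sum[OF finite_box])
  define A where "A = {\<omega>::int^'n. sup_norm_int \<omega> \<le> 2 * int r}"
  have finA: "finite A" unfolding A_def by (rule finite_box)
  have A0: "0 \<in> A" unfolding A_def by (simp add: sup_norm_le)
  have FcA: "Fc \<omega> = 0" if "\<omega> \<notin> A" for \<omega>
    using assms(3)[of \<omega>] that unfolding A_def Fc_def by simp
  have frep: "complex_of_real (f x) = (\<Sum>\<omega>\<in>A. Fc \<omega> * char_fun \<omega> x)" for x
  proof -
    have "complex_of_real (f x) = (\<Sum>\<omega>\<in>KS. a \<omega> * char_fun \<omega> x)"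
      using fun_cong[OF rep, of x] unfolding KS_def by simp
    also have "\<dots> = (\<Sum>\<omega>\<in>KS. Fc \<omega> * char_fun \<omega> x)" by (rule sum.cong) (simp_all add: Fca)
    also have "\<dots> = (\<Sum>\<omega>\<in>KS \<union> A. Fc \<omega> * char_fun \<omega> x)"
      by (rule sum.mono_neutral_left) (use finKS finA Fca in auto)
    also have "\<dots> = (\<Sum>\<omega>\<in>A. Fc \<omega> * char_fun \<omega> x)"
      by (rule sum.mono_neutral_right) (use finKS finA FcA in auto)
    finally show ?thesis .
  qed
  define Phi where "Phi = (\<Sum>\<omega>\<in>A - {0}. cmod (Fc \<omega>))"
  have FN: "F_norm (\<lambda>x. complex_of_real (f x) - fbar) = Phi"
  proof -
    have fb0: "fbar = Fc 0" unfolding fbar_def Fc_def ..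
    have e: "(\<lambda>x. complex_of_real (f x) - fbar) = (\<lambda>x. \<Sum>\<omega>\<in>A. (Fc \<omega> - (if \<omega> = 0 then fbar else 0)) * char_fun \<omega> x)"
      by (rule ext) (simp add: sum_split_const[OF finA A0] frep)
    have fc: "fourier_coeff (\<lambda>x. complex_of_real (f x) - fbar) \<nu> = (if \<nu> \<in> A - {0} then Fc \<nu> else 0)" for \<nu>
      unfolding e fourier_coeff_sum[OF finA] using fb0 by auto
    have "F_norm (\<lambda>x. complex_of_real (f x) - fbar) = infsum (\<lambda>\<nu>. cmod (if \<nu> \<in> A - {0} then Fc \<nu> else 0)) UNIV"
      unfolding F_norm_def fc ..
    also have "\<dots> = infsum (\<lambda>\<nu>. cmod (Fc \<nu>)) (A - {0})"
      by (rule infsum_cong_neutral) auto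
    also have "\<dots> = Phi" unfolding Phi_def using finA by simp
    finally show ?thesis .
  qed
  have part1: "\<forall>s::nat. s \<ge> 3 * r \<longrightarrow> 0 \<le> f_min f - c_star f s \<and> f_min f - c_star f s \<le> B s"
  proof (intro allI impI)
    fix s :: nat assume s: "s \<ge> 3 * r"
    show "0 \<le> f_min f - c_star f s \<and> f_min f - c_star f s \<le> B s"
      unfolding B_def FN using main_bound[OF assms(1) s A_def frep Phi_def] by simp
  qed
  have part2: "B \<sim>[at_top] (\<lambda>s::nat. F_norm (\<lambda>x. complex_of_real (f x) - fbar) *
                 (6 * real r ^ 2 * real CARD('n) / real s ^ 2))"
    unfolding B_def by (rule asym_main[OF assms(1)]) simp
  show ?thesis using part1 part2 by blast
qed

end
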